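(* For every qubit density matrix $\rho$, $C_g(\rho)+M_g(\rho)\le 1$. Explicitly, writing $\rho=\begin{pmatrix} a & c\\ \bar c & 1-a\end{pmatrix}$ in the computational basis, one has $C_g(\rho)=\frac12\left[1-\sqrt{1-4|c|^2}\right]$ and $M_g(\rho)=\frac12\left\{1+\sqrt{4[a(1-a)-|c|^2]}\right\}$, and equality $C_g(\rho)+M_g(\rho)=1$ holds whenever $a=1/2$ (in particular for all states $\frac{1-p}{2}\mathbb{I}_2+p|\psi_2\rangle\langle\psi_2|$, $p\in[0,1]$, $|\psi_2\rangle=(|0\rangle+|1\rangle)/\sqrt2$).
   Context: Computational basis $\{|0\rangle,|1\rangle\}$ of $\mathbb{C}^2$. Incoherent states are density matrices diagonal in this basis; $\mathcal{I}$ denotes their set. The fidelity is $F(\rho,\sigma)=\left(\mathrm{Tr}\sqrt{\sqrt{\sigma}\rho\sqrt{\sigma}}\right)^2$. The geometric coherence is $C_g(\rho)=1-\max_{\sigma\in\mathcal{I}}F(\rho,\sigma)$. The geometric mixedness of a $d$-dimensional state is $M_g(\rho)=F(\rho,\mathbb{I}/d)=\frac1d\left(\mathrm{Tr}\sqrt{\rho}\right)^2$ (here $d=2$). *)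

theory Defs
  imports "HOL-Analysis.Analysis"
begin

text \<open>Qubit operators: 2x2 complex matrices, indexed by the type 2 (indices 1 and 2,
  where 1 corresponds to the basis vector |0> and 2 to |1>).\<close>

type_synonym qmat = "complex^2^2"

definition adjoint :: "qmat \<Rightarrow> qmat" where
  "adjoint A = (\<chi> i j. cnj (A $ j $ i))"

definition hermitian :: "qmat \<Rightarrow> bool" where
  "hermitian A \<longleftrightarrow> adjoint A = A"

definition qform :: "qmat \<Rightarrow> complex^2 \<Rightarrow> complex" where
  "qform A x = (\<Sum>i\<in>UNIV. \<Sum>j\<in>UNIV. cnj (x $ i) * A $ i $ j * x $ j)"

definition psd :: "qmat \<Rightarrow> bool" where
  "psd A \<longleftrightarrow> hermitian A \<and> (\<forall>x. 0 \<le> Re (qform A x))"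

definition density :: "qmat \<Rightarrow> bool" where
  "density A \<longleftrightarrow> psd A \<and> trace A = 1"

definition msqrt :: "qmat \<Rightarrow> qmat" where
  "msqrt A = (THE B. psd B \<and> B ** B = A)"

definition fidelity :: "qmat \<Rightarrow> qmat \<Rightarrow> real" where
  "fidelity \<rho> \<sigma> = (Re (trace (msqrt (msqrt \<sigma> ** \<rho> ** msqrt \<sigma>)))) ^ 2"

definition incoherent :: "qmat \<Rightarrow> bool" where
  "incoherent \<sigma> \<longleftrightarrow> density \<sigma> \<and> (\<forall>i j. i \<noteq> j \<longrightarrow> \<sigma> $ i $ j = 0)"

definition geom_coherence :: "qmat \<Rightarrow> real" where
  "geom_coherence \<rho> = 1 - Sup {fidelity \<rho> \<sigma> | \<sigma>. incoherent \<sigma>}"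

definition geom_mixedness :: "qmat \<Rightarrow> real" where
  "geom_mixedness \<rho> = fidelity \<rho> (mat (1/2))"

end

theory Submission imports Defs begin

definition M2 :: "complex \<Rightarrow> complex \<Rightarrow> complex \<Rightarrow> complex \<Rightarrow> qmat" where
  "M2 a b c d = (\<chi> i j. if i = 1 then (if j = 1 then a else b) else (if j = 1 then c else d))"

lemma two_ne [simp]: "(2::2) \<noteq> 1" "(1::2) \<noteq> 2" by simp_all

lemma M2_simps [simp]: "M2 a b c d $ 1 $ 1 = a" "M2 a b c d $ 1 $ 2 = b"
  "M2 a b c d $ 2 $ 1 = c" "M2 a b c d $ 2 $ 2 = d"
  by (simp_all add: M2_def)

lemma M2_eta: "A = M2 (A$1$1) (A$1$2) (A$2$1) (A$2$2)"
  unfolding M2_def vec_eq_iff forall_2 by simp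

lemma M2_eq_iff: "M2 a b c d = M2 a' b' c' d' \<longleftrightarrow> a = a' \<and> b = b' \<and> c = c' \<and> d = d'"
  by (metis M2_simps)

lemma M2_mult: "M2 a b c d ** M2 e f g h = M2 (a*e+b*g) (a*f+b*h) (c*e+d*g) (c*f+d*h)"
  by (subst M2_eta) (simp add: matrix_matrix_mult_def sum_2)

lemma M2_trace: "trace (M2 a b c d) = a + d"
  by (simp add: trace_def sum_2)

lemma M2_adj: "adjoint (M2 a b c d) = M2 (cnj a) (cnj c) (cnj b) (cnj d)"
  by (subst M2_eta) (simp add: adjoint_def)

lemma M2_qform: "qform (M2 a b c d) x = cnj (x$1) * a * x$1 + cnj (x$1) * b * x$2 + cnj (x$2) * c * x$1 + cnj (x$2) * d * x$2"
  by (simp add: qform_def sum_2)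

lemma mat_M2: "mat k = M2 k 0 0 k"
  by (subst M2_eta) (simp add: mat_def)


lemma herm_M2:
  assumes "hermitian A"
  shows "A = M2 (of_real (Re (A$1$1))) (A$1$2) (cnj (A$1$2)) (of_real (Re (A$2$2)))"
proof -
  have "adjoint A = A" using assms by (simp add: hermitian_def)
  have h: "cnj (A$j$i) = A$i$j" for i j
  proof -
    have "adjoint A $ i $ j = A $ i $ j" using \<open>adjoint A = A\<close> by simp
    then show ?thesis by (simp add: adjoint_def)
  qed
  have 1: "of_real (Re (A$1$1)) = A$1$1" using h[of 1 1] by (simp add: Reals_cnj_iff[symmetric] of_real_Re)
  have 2: "of_real (Re (A$2$2)) = A$2$2" using h[of 2 2] by (simp add: Reals_cnj_iff[symmetric] of_real_Re)
  have 3: "cnj (A$1$2) = A$2$1" using arg_cong[OF h[of 1 2], of cnj] by simp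
  show ?thesis unfolding 1 2 3 by (rule M2_eta)
qed

lemma hermitian_M2: "hermitian (M2 (of_real p) q (cnj q) (of_real r))"
  by (simp add: hermitian_def M2_adj)

lemma Re_qform_M2:
  "Re (qform (M2 (of_real p) q (cnj q) (of_real r)) x) =
     p * (cmod (x$1))^2 + r * (cmod (x$2))^2 + 2 * Re (cnj (x$1) * q * x$2)"
proof -
  have a: "cnj z * of_real t * z = of_real (t * (cmod z)^2)" for z t
  proof -
    have "cnj z * z = of_real ((cmod z)^2)" by (subst complex_norm_square) (simp add: mult.commute)
    then show ?thesis by (simp add: mult.commute mult.left_commute)
  qed
  have b: "cnj (x$2) * cnj q * x$1 = cnj (cnj (x$1) * q * x$2)" by (simp add: mult.commute mult.left_commute)
  have c: "Re (cnj w) = Re w" for w by simp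
  show ?thesis unfolding M2_qform plus_complex.sel a b by (simp only: Re_complex_of_real c plus_complex.sel)
qed

lemma aux_ineq:
  fixes p r Q X Y :: real
  assumes "0 \<le> p" "0 \<le> r" "Q^2 \<le> p*r" "0 \<le> X" "0 \<le> Y" "0 \<le> Q"
  shows "2*Q*X*Y \<le> p*X^2 + r*Y^2"
proof (cases "p = 0")
  case True
  then have "Q^2 \<le> 0" using assms by simp
  then have "Q = 0" by simp
  then show ?thesis using assms by simp
next
  case False
  then have pp: "p > 0" using assms by simp
  have e: "p*(p*X^2 + r*Y^2 - 2*Q*X*Y) = (p*X - Q*Y)^2 + (p*r - Q^2)*Y^2"
    by (simp add: algebra_simps power2_eq_square)
  have "0 \<le> (p*X - Q*Y)^2 + (p*r - Q^2)*Y^2" using assms by simp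
  then have "0 \<le> p*(p*X^2 + r*Y^2 - 2*Q*X*Y)" using e by simp
  then have "0 \<le> p*X^2 + r*Y^2 - 2*Q*X*Y" using pp by (simp add: zero_le_mult_iff)
  then show ?thesis by simp
qed

lemma psd_M2_iff:
  "psd (M2 (of_real p) q (cnj q) (of_real r)) \<longleftrightarrow> 0 \<le> p \<and> 0 \<le> r \<and> (cmod q)^2 \<le> p*r"
proof
  assume "psd (M2 (of_real p) q (cnj q) (of_real r))"
  then have Q: "0 \<le> p * (cmod (x$1))^2 + r * (cmod (x$2))^2 + 2 * Re (cnj (x$1) * q * x$2)" for x :: "complex^2"
    unfolding psd_def Re_qform_M2[symmetric] by blast
  define v :: "complex \<Rightarrow> complex \<Rightarrow> complex^2" where "v a b = (\<chi> i. if i = 1 then a else b)" for a b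
  have v1: "v a b $ 1 = a" and v2: "v a b $ 2 = b" for a b by (simp_all add: v_def)
  have p: "0 \<le> p" using Q[of "v 1 0"] by (simp add: v1 v2)
  have r: "0 \<le> r" using Q[of "v 0 1"] by (simp add: v1 v2)
  have sq: "cmod z * cmod z = Re z * Re z + Im z * Im z" for z
    by (metis cmod_power2 power2_eq_square)
  have e1: "0 \<le> r * (p*r - (cmod q)^2)" using Q[of "v (of_real r) (- cnj q)"]
    by (simp add: v1 v2 cmod_power2 power2_eq_square algebra_simps sq)
  have e2: "0 \<le> p * (p*r - (cmod q)^2)" using Q[of "v (- q) (of_real p)"]
    by (simp add: v1 v2 cmod_power2 power2_eq_square algebra_simps sq)
  have e3: "0 \<le> p * (cmod q)^2 + r - 2 * (cmod q)^2" using Q[of "v q (-1)"]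
    by (simp add: v1 v2 cmod_power2 power2_eq_square algebra_simps sq)
  have "(cmod q)^2 \<le> p*r"
  proof (cases "r > 0")
    case True then show ?thesis using e1 by (simp add: zero_le_mult_iff)
  next
    case False
    then have r0: "r = 0" using r by simp
    show ?thesis
    proof (cases "p > 0")
      case True then show ?thesis using e2 by (simp add: zero_le_mult_iff)
    next
      case False then have "p = 0" using p by simp
      then show ?thesis using e3 r0 by simp
    qed
  qed
  then show "0 \<le> p \<and> 0 \<le> r \<and> (cmod q)^2 \<le> p*r" using p r by simp
next
  assume a: "0 \<le> p \<and> 0 \<le> r \<and> (cmod q)^2 \<le> p*r"
  have "0 \<le> p * (cmod (x$1))^2 + r * (cmod (x$2))^2 + 2 * Re (cnj (x$1) * q * x$2)" for x :: "complex^2"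
  proof -
    have "- Re (cnj (x$1) * q * x$2) \<le> cmod (cnj (x$1) * q * x$2)"
      by (metis abs_Re_le_cmod abs_le_D2)
    also have "\<dots> = cmod q * cmod (x$1) * cmod (x$2)" by (simp add: norm_mult)
    finally have "- Re (cnj (x$1) * q * x$2) \<le> cmod q * cmod (x$1) * cmod (x$2)" .
    moreover have "2 * cmod q * cmod (x$1) * cmod (x$2) \<le> p * (cmod (x$1))^2 + r * (cmod (x$2))^2"
      using a by (intro aux_ineq) auto
    ultimately show ?thesis by linarith
  qed
  then show "psd (M2 (of_real p) q (cnj q) (of_real r))"
    unfolding psd_def Re_qform_M2 using hermitian_M2 by blast
qed


lemma cnj_mult_self: "q * cnj q = of_real ((cmod q)^2)"
  by (rule complex_norm_square[symmetric])

lemma sq_M2: "M2 (of_real p) q (cnj q) (of_real r) ** M2 (of_real p) q (cnj q) (of_real r) =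
   M2 (of_real (p^2 + (cmod q)^2)) (of_real (p+r) * q) (of_real (p+r) * cnj q) (of_real (r^2 + (cmod q)^2))"
proof -
  have "cnj q * q = of_real ((cmod q)^2)" by (metis cnj_mult_self mult.commute)
  then show ?thesis unfolding M2_mult M2_eq_iff
    by (simp add: cnj_mult_self algebra_simps power2_eq_square)
qed

definition sqd :: "qmat \<Rightarrow> real" where
  "sqd A = sqrt (Re (A$1$1) * Re (A$2$2) - (cmod (A$1$2))^2)"
definition sqt :: "qmat \<Rightarrow> real" where
  "sqt A = sqrt (Re (A$1$1) + Re (A$2$2) + 2 * sqd A)"
definition sqrtf :: "qmat \<Rightarrow> qmat" where
  "sqrtf A = M2 (of_real ((Re (A$1$1) + sqd A) / sqt A)) (A$1$2 / of_real (sqt A))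
                (cnj (A$1$2) / of_real (sqt A)) (of_real ((Re (A$2$2) + sqd A) / sqt A))"

lemma psd_M2_ex:
  assumes "psd A"
  obtains p q r where "A = M2 (of_real p) q (cnj q) (of_real r)" "0 \<le> p" "0 \<le> r" "(cmod q)^2 \<le> p*r"
proof -
  have h: "A = M2 (of_real (Re (A$1$1))) (A$1$2) (cnj (A$1$2)) (of_real (Re (A$2$2)))"
    using assms herm_M2 psd_def by blast
  then have "psd (M2 (of_real (Re (A$1$1))) (A$1$2) (cnj (A$1$2)) (of_real (Re (A$2$2))))" using assms by simp
  then show ?thesis using that h unfolding psd_M2_iff by blast
qed

lemma sqrt_unique:
  assumes B: "psd B" and A: "B ** B = A"
  shows "B = sqrtf A"
proof -
  obtain p q r where Bf: "B = M2 (of_real p) q (cnj q) (of_real r)" and p: "0 \<le> p" and r: "0 \<le> r"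
    and pq: "(cmod q)^2 \<le> p*r" using psd_M2_ex[OF B] by blast
  have Af: "A = M2 (of_real (p^2 + (cmod q)^2)) (of_real (p+r) * q) (of_real (p+r) * cnj q) (of_real (r^2 + (cmod q)^2))"
    using A Bf sq_M2 by simp
  have n: "cmod (A$1$2) = (p+r) * cmod q" unfolding Af M2_simps norm_mult norm_of_real using p r by simp
  have "Re (A$1$1) * Re (A$2$2) - (cmod (A$1$2))^2 = (p*r - (cmod q)^2)^2"
    unfolding n unfolding Af by (simp add: norm_mult power_mult_distrib algebra_simps power2_eq_square)
  then have d: "sqd A = p*r - (cmod q)^2" unfolding sqd_def using pq by simp
  have "Re (A$1$1) + Re (A$2$2) + 2 * sqd A = (p + r)^2"
    unfolding d unfolding Af by (simp add: algebra_simps power2_eq_square)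
  then have t: "sqt A = p + r" unfolding sqt_def using p r by simp
  show ?thesis
  proof (cases "p + r = 0")
    case True
    then have "p = 0" "r = 0" using p r by auto
    then have "q = 0" using pq by simp
    then show ?thesis unfolding sqrtf_def t Bf using \<open>p = 0\<close> \<open>r = 0\<close> by (simp add: Af)
  next
    case False
    then have pr: "p + r > 0" using p r by simp
    have 1: "(Re (A$1$1) + sqd A) / sqt A = p"
      unfolding t d using pr by (simp add: Af field_simps power2_eq_square)
    have 2: "(Re (A$2$2) + sqd A) / sqt A = r"
      unfolding t d using pr by (simp add: Af field_simps power2_eq_square)
    have nz: "(of_real (p+r)::complex) \<noteq> 0" using pr by (simp only: of_real_eq_0_iff)
    have a12: "A$1$2 = of_real (p+r) * q" unfolding Af M2_simps ..
    have 3: "A$1$2 / of_real (sqt A) = q" unfolding t a12 using nz by (simp del: of_real_add)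
    have 4: "cnj (A$1$2) / of_real (sqt A) = cnj q" using arg_cong[OF 3, of cnj] by simp
    show ?thesis unfolding sqrtf_def 1 2 3 4 Bf ..
  qed
qed


lemma sqrt_exists:
  assumes "psd A"
  shows "psd (sqrtf A) \<and> sqrtf A ** sqrtf A = A"
proof -
  obtain a q r where Af: "A = M2 (of_real a) q (cnj q) (of_real r)" and a: "0 \<le> a" and r: "0 \<le> r"
    and aq: "(cmod q)^2 \<le> a*r" using psd_M2_ex[OF assms] by blast
  define d where "d = sqrt (a*r - (cmod q)^2)"
  define t where "t = sqrt (a + r + 2*d)"
  have d0: "0 \<le> d" unfolding d_def using aq by simp
  have d2: "d^2 = a*r - (cmod q)^2" unfolding d_def using aq by simp
  have t0: "0 \<le> t" unfolding t_def using a r d0 by simp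
  have t2: "t^2 = a + r + 2*d" unfolding t_def using a r d0 by simp
  have sd: "sqd A = d" unfolding sqd_def d_def Af by simp
  have st: "sqt A = t" unfolding sqt_def t_def sd unfolding Af by simp
  have S: "sqrtf A = M2 (of_real ((a + d)/t)) (q / of_real t) (cnj (q / of_real t)) (of_real ((r+d)/t))"
    unfolding sqrtf_def sd st unfolding Af by simp
  show ?thesis
  proof (cases "t = 0")
    case True
    then have "a + r + 2*d = 0" using t2 by simp
    then have "a = 0" "r = 0" "d = 0" using a r d0 by auto
    then have "q = 0" using aq by simp
    have z: "psd (M2 0 0 0 0)" using psd_M2_iff[of 0 0 0] by simp
    show ?thesis unfolding S using True \<open>a = 0\<close> \<open>r = 0\<close> \<open>q = 0\<close>
      by (simp add: z Af M2_mult)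
  next
    case False
    then have tp: "t > 0" using t0 by simp
    have psd1: "psd (sqrtf A)" unfolding S psd_M2_iff
    proof (intro conjI)
      show "0 \<le> (a + d) / t" using a d0 tp by simp
      show "0 \<le> (r + d) / t" using r d0 tp by simp
      have "(cmod q)^2 \<le> (a + d) * (r + d)"
      proof -
        have "0 \<le> a*d + d*d + d*r" using a r d0 by simp
        then show ?thesis using aq by (simp add: algebra_simps)
      qed
      then have "(cmod q)^2 / t^2 \<le> (a + d) * (r + d) / t^2" using tp by (simp add: divide_right_mono)
      then show "(cmod (q / of_real t))^2 \<le> (a + d) / t * ((r + d) / t)"
        using tp by (simp add: norm_divide power_divide power2_eq_square)
    qed
    have e1: "((a + d)/t)^2 + (cmod (q / of_real t))^2 = a"
    proof -
      have "((a + d)/t)^2 + (cmod (q / of_real t))^2 = ((a+d)^2 + (cmod q)^2) / t^2"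
        using tp by (simp add: norm_divide power_divide field_simps)
      also have "(a+d)^2 + (cmod q)^2 = a * t^2" unfolding t2 using d2 by (simp add: algebra_simps power2_eq_square)
      finally show ?thesis using tp by simp
    qed
    have e2: "((r + d)/t)^2 + (cmod (q / of_real t))^2 = r"
    proof -
      have "((r + d)/t)^2 + (cmod (q / of_real t))^2 = ((r+d)^2 + (cmod q)^2) / t^2"
        using tp by (simp add: norm_divide power_divide field_simps)
      also have "(r+d)^2 + (cmod q)^2 = r * t^2" unfolding t2 using d2 by (simp add: algebra_simps power2_eq_square)
      finally show ?thesis using tp by simp
    qed
    have e3: "of_real ((a + d)/t + (r + d)/t) * (q / of_real t) = q"
    proof -
      have "(a + d)/t + (r + d)/t = (a + r + 2*d)/t" using tp by (simp add: field_simps)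
      also have "\<dots> = t^2 / t" unfolding t2 ..
      also have "\<dots> = t" using tp by (simp add: power2_eq_square)
      finally have "(a + d)/t + (r + d)/t = t" .
      then show ?thesis using tp by simp
    qed
    have "sqrtf A ** sqrtf A = A"
      unfolding S sq_M2 e1 e2 e3 unfolding Af using arg_cong[OF e3, of cnj] by simp
    then show ?thesis using psd1 by simp
  qed
qed

lemma msqrt_eq:
  assumes "psd B" "B ** B = A"
  shows "msqrt A = B"
  unfolding msqrt_def
proof (rule the_equality)
  show "psd B \<and> B ** B = A" using assms by simp
  fix C assume "psd C \<and> C ** C = A"
  then show "C = B" using sqrt_unique assms by metis
qed

lemma msqrt_sqrtf: "psd A \<Longrightarrow> msqrt A = sqrtf A"
  using sqrt_exists msqrt_eq by blast

lemma trace_msqrt_sq: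
  assumes "psd A"
  shows "(Re (trace (msqrt A)))^2 = Re (A$1$1) + Re (A$2$2) + 2 * sqd A"
proof -
  obtain a q r where Af: "A = M2 (of_real a) q (cnj q) (of_real r)" and a: "0 \<le> a" and r: "0 \<le> r"
    and aq: "(cmod q)^2 \<le> a*r" using psd_M2_ex[OF assms] by blast
  have d0: "0 \<le> sqd A" unfolding sqd_def Af using aq by simp
  have x0: "0 \<le> Re (A$1$1) + Re (A$2$2) + 2 * sqd A" unfolding Af using a r d0 by (simp add: Af)
  have "Re (trace (msqrt A)) = (Re (A$1$1) + Re (A$2$2) + 2 * sqd A) / sqt A"
    unfolding msqrt_sqrtf[OF assms] sqrtf_def M2_trace by (simp add: add_divide_distrib)
  also have "\<dots> = sqt A" unfolding sqt_def using x0
    by (metis real_div_sqrt)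
  finally show ?thesis unfolding sqt_def using x0 by simp
qed


lemma fid_diag:
  assumes a: "0 \<le> a" "a \<le> 1" and c: "(cmod c)^2 \<le> a*(1-a)" and s: "0 \<le> s" "s \<le> 1"
  shows "fidelity (M2 (of_real a) c (cnj c) (of_real (1-a))) (M2 (of_real s) 0 0 (of_real (1-s)))
         = s*a + (1-s)*(1-a) + 2 * sqrt (s*(1-s)*(a*(1-a) - (cmod c)^2))"
proof -
  define S where "S = M2 (of_real (sqrt s)) 0 (cnj 0) (of_real (sqrt (1-s)))"
  have Sp: "psd S" unfolding S_def psd_M2_iff using s by simp
  have SS: "S ** S = M2 (of_real s) 0 0 (of_real (1-s))" unfolding S_def sq_M2 using s by simp
  have ms: "msqrt (M2 (of_real s) 0 0 (of_real (1-s))) = S" using msqrt_eq[OF Sp SS] .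
  define k where "k = sqrt s * sqrt (1-s)"
  have k0: "0 \<le> k" unfolding k_def using s by simp
  have k2: "k^2 = s*(1-s)" unfolding k_def using s by (simp add: power_mult_distrib)
  have M: "S ** M2 (of_real a) c (cnj c) (of_real (1-a)) ** S =
           M2 (of_real (s*a)) (of_real k * c) (cnj (of_real k * c)) (of_real ((1-s)*(1-a)))"
  proof -
    have hs1: "(of_real (sqrt s)::complex) * of_real (sqrt s) = of_real s" using s by (simp flip: of_real_mult)
    have hs2: "(of_real (sqrt (1-s))::complex) * of_real (sqrt (1-s)) = of_real (1-s)" using s by (simp flip: of_real_mult)
    have e1: "of_real (sqrt s) * of_real a * of_real (sqrt s) = (of_real (s*a) :: complex)"
      using hs1 by (simp add: mult.commute mult.left_commute)
    have e2: "of_real (sqrt (1-s)) * of_real (1-a) * of_real (sqrt (1-s)) = (of_real ((1-s)*(1-a)) :: complex)"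
      using hs2 by (simp add: mult.commute mult.left_commute)
    show ?thesis unfolding S_def M2_mult M2_eq_iff k_def using e1 e2
      by simp
  qed
  have Mp: "psd (M2 (of_real (s*a)) (of_real k * c) (cnj (of_real k * c)) (of_real ((1-s)*(1-a))))"
    unfolding psd_M2_iff
  proof (intro conjI)
    show "0 \<le> s*a" using a s by simp
    show "0 \<le> (1-s)*(1-a)" using a s by simp
    have "(cmod (of_real k * c))^2 = k^2 * (cmod c)^2" using k0 by (simp add: norm_mult power_mult_distrib)
    also have "\<dots> \<le> k^2 * (a*(1-a))" using c by (intro mult_left_mono) auto
    also have "\<dots> = s * a * ((1 - s) * (1 - a))" unfolding k2 by (simp add: algebra_simps)
    finally show "(cmod (of_real k * c))^2 \<le> s * a * ((1 - s) * (1 - a))" .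
  qed
  have sd: "sqd (M2 (of_real (s*a)) (of_real k * c) (cnj (of_real k * c)) (of_real ((1-s)*(1-a))))
       = sqrt (s*(1-s)*(a*(1-a) - (cmod c)^2))"
  proof -
    have "(cmod (of_real k * c))^2 = k^2 * (cmod c)^2" using k0 by (simp add: norm_mult power_mult_distrib)
    then show ?thesis unfolding sqd_def k2 by (simp add: algebra_simps)
  qed
  show ?thesis unfolding fidelity_def ms M trace_msqrt_sq[OF Mp] sd by simp
qed


lemma density_form:
  assumes "density \<rho>"
  shows "\<rho> = M2 (of_real (Re (\<rho>$1$1))) (\<rho>$1$2) (cnj (\<rho>$1$2)) (of_real (1 - Re (\<rho>$1$1)))"
    "0 \<le> Re (\<rho>$1$1)" "Re (\<rho>$1$1) \<le> 1" "(cmod (\<rho>$1$2))^2 \<le> Re (\<rho>$1$1) * (1 - Re (\<rho>$1$1))"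
proof -
  have ps: "psd \<rho>" and tr: "trace \<rho> = 1" using assms density_def by auto
  have h: "\<rho> = M2 (of_real (Re (\<rho>$1$1))) (\<rho>$1$2) (cnj (\<rho>$1$2)) (of_real (Re (\<rho>$2$2)))"
    using ps herm_M2 psd_def by blast
  have "Re (trace \<rho>) = 1" using tr by simp
  then have r: "Re (\<rho>$2$2) = 1 - Re (\<rho>$1$1)" by (subst (asm) h) (simp add: M2_trace)
  show 1: "\<rho> = M2 (of_real (Re (\<rho>$1$1))) (\<rho>$1$2) (cnj (\<rho>$1$2)) (of_real (1 - Re (\<rho>$1$1)))"
    using h unfolding r .
  have "psd (M2 (of_real (Re (\<rho>$1$1))) (\<rho>$1$2) (cnj (\<rho>$1$2)) (of_real (1 - Re (\<rho>$1$1))))"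
    using ps 1 by simp
  then have "0 \<le> Re (\<rho>$1$1) \<and> 0 \<le> 1 - Re (\<rho>$1$1) \<and> (cmod (\<rho>$1$2))^2 \<le> Re (\<rho>$1$1) * (1 - Re (\<rho>$1$1))"
    unfolding psd_M2_iff .
  then show "0 \<le> Re (\<rho>$1$1)" "Re (\<rho>$1$1) \<le> 1" "(cmod (\<rho>$1$2))^2 \<le> Re (\<rho>$1$1) * (1 - Re (\<rho>$1$1))"
    by auto
qed

lemma incoherent_form:
  assumes "incoherent \<sigma>"
  obtains s where "0 \<le> s" "s \<le> 1" "\<sigma> = M2 (of_real s) 0 0 (of_real (1-s))"
proof -
  have d: "density \<sigma>" and z: "\<sigma>$1$2 = 0" using assms incoherent_def by auto
  show ?thesis using that[of "Re (\<sigma>$1$1)"] density_form[OF d] unfolding z by simp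
qed

lemma incoherent_diag:
  assumes "0 \<le> s" "s \<le> 1"
  shows "incoherent (M2 (of_real s) 0 0 (of_real (1-s)))"
proof -
  have "psd (M2 (of_real s) 0 (cnj 0) (of_real (1-s)))" unfolding psd_M2_iff using assms by simp
  then have "density (M2 (of_real s) 0 0 (of_real (1-s)))" unfolding density_def by (simp add: M2_trace)
  moreover have "\<forall>i j. i \<noteq> j \<longrightarrow> (M2 (of_real s) 0 0 (of_real (1-s))) $ i $ j = 0"
    unfolding forall_2 by simp
  ultimately show ?thesis unfolding incoherent_def by blast
qed

lemma opt_setup:
  fixes a C :: real
  assumes a: "0 \<le> a" "a \<le> 1" and C: "0 \<le> C" "C \<le> a*(1-a)"
  defines "R \<equiv> sqrt (1 - 4*C)"
  shows "R^2 = 1 - 4*C" "0 \<le> R" "\<bar>2*a-1\<bar> \<le> R"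
    "0 \<le> (1-2*a+R)/2" "0 \<le> (2*a-1+R)/2" "((1-2*a+R)/2) * ((2*a-1+R)/2) = a*(1-a) - C"
proof -
  have "0 \<le> (2*a-1)^2" by simp
  then have "4*(a*(1-a)) \<le> 1" by (simp add: algebra_simps power2_eq_square)
  then have h: "0 \<le> 1 - 4*C" using C by linarith
  show R2: "R^2 = 1 - 4*C" unfolding R_def by (rule real_sqrt_pow2[OF h])
  show R0: "0 \<le> R" unfolding R_def using h by simp
  have "(2*a-1)^2 \<le> R^2" unfolding R2 using C by (simp add: algebra_simps power2_eq_square)
  then show A: "\<bar>2*a-1\<bar> \<le> R" using R0 by (metis abs_le_square_iff abs_of_nonneg)
  show "0 \<le> (1-2*a+R)/2" using A by simp
  show "0 \<le> (2*a-1+R)/2" using A by simp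
  have RR: "R*R = 1 - 4*C" using R2 by (simp add: power2_eq_square)
  have "((1-2*a+R)/2) * ((2*a-1+R)/2) = (R*R - (2*a-1)*(2*a-1))/4" by (simp add: field_simps)
  also have "\<dots> = (1 - 4*C - (2*a-1)*(2*a-1))/4" unfolding RR ..
  also have "\<dots> = a*(1-a) - C" by (simp add: field_simps)
  finally show "((1-2*a+R)/2) * ((2*a-1+R)/2) = a*(1-a) - C" .
qed

lemma opt_bound:
  fixes a C s :: real
  assumes a: "0 \<le> a" "a \<le> 1" and C: "0 \<le> C" "C \<le> a*(1-a)" and s: "0 \<le> s" "s \<le> 1"
  shows "s*a + (1-s)*(1-a) + 2 * sqrt (s*(1-s)*(a*(1-a) - C)) \<le> (1 + sqrt (1 - 4*C))/2"
proof -
  define R where "R = sqrt (1 - 4*C)"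
  define \<alpha> where "\<alpha> = (1-2*a+R)/2"
  define \<beta> where "\<beta> = (2*a-1+R)/2"
  note st = opt_setup[OF a C, folded R_def, folded \<alpha>_def \<beta>_def]
  define u where "u = sqrt s"
  define v where "v = sqrt (1-s)"
  have u2: "u^2 = s" using s unfolding u_def by simp
  have v2: "v^2 = 1-s" using s unfolding v_def by simp
  have u0: "0 \<le> u" and v0: "0 \<le> v" unfolding u_def v_def using s by simp_all
  define D where "D = a*(1-a) - C"
  have D0: "0 \<le> D" unfolding D_def using C by simp
  have sq: "sqrt (s*(1-s)*D) = u * v * sqrt D" unfolding u_def v_def using s by (simp add: real_sqrt_mult)
  have key: "2 * sqrt D * u * v \<le> \<alpha> * u^2 + \<beta> * v^2"
    using st D0 u0 v0 by (intro aux_ineq) (auto simp: D_def)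
  have "(1+R)/2 - (s*a + (1-s)*(1-a) + 2 * (u * v * sqrt D)) = \<alpha> * u^2 + \<beta> * v^2 - 2 * sqrt D * u * v"
    unfolding \<alpha>_def \<beta>_def u2 v2 by (simp add: field_simps)
  then show ?thesis using key sq unfolding R_def D_def by linarith
qed


lemma opt_attain:
  fixes a C :: real
  assumes a: "0 \<le> a" "a \<le> 1" and C: "0 \<le> C" "C \<le> a*(1-a)"
  shows "\<exists>s. 0 \<le> s \<and> s \<le> 1 \<and> s*a + (1-s)*(1-a) + 2 * sqrt (s*(1-s)*(a*(1-a) - C)) = (1 + sqrt (1 - 4*C))/2"
proof -
  define R where "R = sqrt (1 - 4*C)"
  define \<alpha> where "\<alpha> = (1-2*a+R)/2"
  define \<beta> where "\<beta> = (2*a-1+R)/2"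
  note st = opt_setup[OF a C, folded R_def, folded \<alpha>_def \<beta>_def]
  define D where "D = a*(1-a) - C"
  have D0: "0 \<le> D" unfolding D_def using C by simp
  have ab: "\<alpha> * \<beta> = D" using st(6) unfolding D_def .
  have apb: "\<alpha> + \<beta> = R" unfolding \<alpha>_def \<beta>_def by (simp add: field_simps)
  show ?thesis
  proof (cases "R = 0")
    case True
    then have "a = 1/2" using st(3) by simp
    moreover have "D = 0" using ab True st(4,5) apb by (simp add: \<alpha>_def \<beta>_def)
    ultimately show ?thesis unfolding R_def[symmetric] D_def[symmetric] using True
      by (intro exI[of _ "1/2"]) simp
  next
    case False
    then have Rp: "R > 0" using st(2) by simp
    define s where "s = \<beta> / R"
    have s1: "1 - s = \<alpha> / R" unfolding s_def using Rp apb by (simp add: field_simps)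
    have s0: "0 \<le> s" unfolding s_def using st(5) Rp \<beta>_def by simp
    have "0 \<le> \<alpha>" using st(4) unfolding \<alpha>_def .
    then have "0 \<le> \<alpha> / R" using Rp by simp
    then have s1': "s \<le> 1" using s1 by linarith
    have "s*(1-s)*D = (D/R)^2" unfolding s1 unfolding s_def using ab
      by (simp add: power2_eq_square mult.commute)
    then have sq: "sqrt (s*(1-s)*D) = D/R" using D0 Rp by simp
    have id: "\<beta>*a + \<alpha>*(1-a) + 2*(\<alpha>*\<beta>) = R*(1+R)/2"
      unfolding \<alpha>_def \<beta>_def by (simp add: field_simps power2_eq_square)
    have "s*a + (1-s)*(1-a) + 2 * sqrt (s*(1-s)*D) = (\<beta>*a + \<alpha>*(1-a) + 2*(\<alpha>*\<beta>)) / R"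
      unfolding sq unfolding s1 unfolding s_def ab[symmetric] using Rp by (simp add: field_simps)
    also have "\<dots> = (1+R)/2" unfolding id using Rp by simp
    finally show ?thesis using s0 s1' unfolding D_def R_def by blast
  qed
qed


lemma part1:
  assumes "density \<rho>"
  shows "geom_coherence \<rho> = (1 - sqrt (1 - 4 * (cmod (\<rho>$1$2))^2)) / 2"
    "geom_mixedness \<rho> = (1 + sqrt (4 * (Re (\<rho>$1$1) * (1 - Re (\<rho>$1$1)) - (cmod (\<rho>$1$2))^2))) / 2"
proof -
  define a where "a = Re (\<rho>$1$1)"
  define c where "c = \<rho>$1$2"
  note df = density_form[OF assms, folded a_def c_def]
  have a0: "0 \<le> a" "a \<le> 1" using df by auto
  have C: "0 \<le> (cmod c)^2" "(cmod c)^2 \<le> a*(1-a)" using df by auto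
  have rf: "\<rho> = M2 (of_real a) c (cnj c) (of_real (1-a))" using df(1) .
  define lam where "lam = (1 + sqrt (1 - 4 * (cmod c)^2)) / 2"
  define S where "S = {fidelity \<rho> \<sigma> | \<sigma>. incoherent \<sigma>}"
  have ub: "x \<le> lam" if xS: "x \<in> S" for x
  proof -
    obtain \<sigma> where x: "x = fidelity \<rho> \<sigma>" and i: "incoherent \<sigma>" using xS S_def by blast
    obtain s where s: "0 \<le> s" "s \<le> 1" "\<sigma> = M2 (of_real s) 0 0 (of_real (1-s))"
      using incoherent_form[OF i] by blast
    show ?thesis unfolding x s(3) rf fid_diag[OF a0 C(2) s(1,2)] lam_def
      using opt_bound[OF a0 C s(1,2)] .
  qed
  have mem: "lam \<in> S"
  proof -
    obtain s where s: "0 \<le> s" "s \<le> 1"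
      "s*a + (1-s)*(1-a) + 2 * sqrt (s*(1-s)*(a*(1-a) - (cmod c)^2)) = lam"
      using opt_attain[OF a0 C] unfolding lam_def by blast
    have "fidelity \<rho> (M2 (of_real s) 0 0 (of_real (1-s))) = lam"
      unfolding rf fid_diag[OF a0 C(2) s(1,2)] using s(3) .
    then show ?thesis unfolding S_def using incoherent_diag[OF s(1,2)] by blast
  qed
  have "Sup S = lam" using mem ub by (intro cSup_eq_maximum) auto
  then show "geom_coherence \<rho> = (1 - sqrt (1 - 4 * (cmod (\<rho>$1$2))^2)) / 2"
    unfolding geom_coherence_def S_def[symmetric] c_def[symmetric] lam_def by simp
  have m: "mat (1/2) = M2 (of_real (1/2)) 0 0 (of_real (1 - 1/2))" unfolding mat_M2 by simp
  define D where "D = a*(1-a) - (cmod c)^2"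
  have D0: "0 \<le> D" unfolding D_def using C by simp
  have "geom_mixedness \<rho> = 1/2 * a + (1 - 1/2) * (1 - a) + 2 * sqrt (1/2 * (1 - 1/2) * D)"
  proof -
    have "fidelity \<rho> (mat (1/2)) = 1/2 * a + (1 - 1/2) * (1 - a) + 2 * sqrt (1/2 * (1 - 1/2) * (a*(1-a) - (cmod c)^2))"
      unfolding m rf by (rule fid_diag[OF a0 C(2)]) simp_all
    then show ?thesis unfolding geom_mixedness_def D_def .
  qed
  also have "\<dots> = (1 + sqrt (4 * D)) / 2"
  proof -
    have "sqrt (1/2 * (1 - 1/2) * D) = sqrt D / 2" by (simp add: real_sqrt_mult real_sqrt_divide)
    moreover have "sqrt (4 * D) = 2 * sqrt D" by (simp add: real_sqrt_mult)
    ultimately show ?thesis by (simp add: field_simps)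
  qed
  finally show "geom_mixedness \<rho> = (1 + sqrt (4 * (Re (\<rho>$1$1) * (1 - Re (\<rho>$1$1)) - (cmod (\<rho>$1$2))^2))) / 2"
    unfolding D_def a_def c_def .
qed

lemma part1_all:
  assumes "density \<rho>"
  shows "(let a = Re (\<rho> $ 1 $ 1); c = \<rho> $ 1 $ 2 in
              geom_coherence \<rho> + geom_mixedness \<rho> \<le> 1 \<and>
              geom_coherence \<rho> = (1 - sqrt (1 - 4 * (cmod c)\<^sup>2)) / 2 \<and>
              geom_mixedness \<rho> = (1 + sqrt (4 * (a * (1 - a) - (cmod c)\<^sup>2))) / 2 \<and>
              (a = 1/2 \<longrightarrow> geom_coherence \<rho> + geom_mixedness \<rho> = 1))"
proof -
  define a where "a = Re (\<rho>$1$1)"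
  define c where "c = \<rho>$1$2"
  note df = density_form[OF assms, folded a_def c_def]
  note p1 = part1[OF assms, folded a_def c_def]
  have "0 \<le> (2*a-1)^2" by simp
  then have h: "4 * (a * (1 - a) - (cmod c)^2) \<le> 1 - 4 * (cmod c)^2" by (simp add: algebra_simps power2_eq_square)
  have le: "geom_coherence \<rho> + geom_mixedness \<rho> \<le> 1"
  proof -
    have g: "(1 - Y)/2 + (1 + X)/2 \<le> (1::real)" if "X \<le> Y" for X Y using that by (simp add: field_simps)
    show ?thesis unfolding p1 by (rule g[OF real_sqrt_le_mono[OF h]])
  qed
  have eq: "geom_coherence \<rho> + geom_mixedness \<rho> = 1" if "a = 1/2"
  proof -
    have "4 * (a * (1 - a) - (cmod c)^2) = 1 - 4 * (cmod c)^2" unfolding that by (simp add: algebra_simps)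
    moreover have g2: "(1 - Y)/2 + (1 + Y)/2 = (1::real)" for Y by (simp add: field_simps)
    ultimately show ?thesis unfolding p1 by simp
  qed
  show ?thesis unfolding Let_def a_def[symmetric] c_def[symmetric] using le eq p1 by blast
qed

lemma werner:
  assumes "0 \<le> p" "p \<le> 1"
  shows "mat (complex_of_real ((1 - p) / 2)) + (\<chi> i j. complex_of_real (p / 2)) =
         M2 (of_real (1/2)) (of_real (p/2)) (cnj (of_real (p/2))) (of_real (1 - 1/2))"
proof -
  have "\<forall>i j. (mat (complex_of_real ((1 - p) / 2)) + (\<chi> i j. complex_of_real (p / 2)) :: qmat) $ i $ j =
         M2 (of_real (1/2)) (of_real (p/2)) (cnj (of_real (p/2))) (of_real (1 - 1/2)) $ i $ j"
    unfolding forall_2 by (simp add: mat_def field_simps flip: of_real_add of_real_divide)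
  then show ?thesis by (simp add: vec_eq_iff)
qed

lemma werner_density:
  assumes "0 \<le> p" "p \<le> 1"
  shows "density (M2 (of_real (1/2)) (of_real (p/2)) (cnj (of_real (p/2))) (of_real (1 - 1/2)))"
proof -
  have "(cmod (of_real (p/2)))^2 \<le> 1/2 * (1 - 1/2)" using assms by (simp add: power2_eq_square abs_of_nonneg mult_le_one)
  then have "psd (M2 (of_real (1/2)) (of_real (p/2)) (cnj (of_real (p/2))) (of_real (1 - 1/2)))"
    unfolding psd_M2_iff by simp
  then show ?thesis unfolding density_def M2_trace by simp
qed

theorem mainTheorem4:
  shows "(\<forall>\<rho>. density \<rho> \<longrightarrow>
            (let a = Re (\<rho> $ 1 $ 1); c = \<rho> $ 1 $ 2 in
              geom_coherence \<rho> + geom_mixedness \<rho> \<le> 1 \<and>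
              geom_coherence \<rho> = (1 - sqrt (1 - 4 * (cmod c)\<^sup>2)) / 2 \<and>
              geom_mixedness \<rho> = (1 + sqrt (4 * (a * (1 - a) - (cmod c)\<^sup>2))) / 2 \<and>
              (a = 1/2 \<longrightarrow> geom_coherence \<rho> + geom_mixedness \<rho> = 1)))
       \<and> (\<forall>p::real. 0 \<le> p \<and> p \<le> 1 \<longrightarrow>
            (let \<rho> = mat (complex_of_real ((1 - p) / 2)) + (\<chi> i j. complex_of_real (p / 2)) in
              density \<rho> \<and> geom_coherence \<rho> + geom_mixedness \<rho> = 1))"
    proof (intro conjI allI impI)
  fix \<rho> :: qmat assume "density \<rho>"
  then show "let a = Re (\<rho> $ 1 $ 1); c = \<rho> $ 1 $ 2 in
              geom_coherence \<rho> + geom_mixedness \<rho> \<le> 1 \<and>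
              geom_coherence \<rho> = (1 - sqrt (1 - 4 * (cmod c)\<^sup>2)) / 2 \<and>
              geom_mixedness \<rho> = (1 + sqrt (4 * (a * (1 - a) - (cmod c)\<^sup>2))) / 2 \<and>
              (a = 1/2 \<longrightarrow> geom_coherence \<rho> + geom_mixedness \<rho> = 1)"
    by (rule part1_all)
next
  fix p :: real assume "0 \<le> p \<and> p \<le> 1"
  then have p: "0 \<le> p" "p \<le> 1" by auto
  define \<rho> where "\<rho> = M2 (of_real (1/2)) (of_real (p/2)) (cnj (of_real (p/2))) (of_real (1 - 1/2))"
  have d: "density \<rho>" unfolding \<rho>_def using werner_density[OF p] .
  have "Re (\<rho>$1$1) = 1/2" unfolding \<rho>_def by simp
  then have "geom_coherence \<rho> + geom_mixedness \<rho> = 1" using part1_all[OF d] by (simp add: Let_def)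
  then show "let \<rho> = mat (complex_of_real ((1 - p) / 2)) + (\<chi> i j. complex_of_real (p / 2)) in
              density \<rho> \<and> geom_coherence \<rho> + geom_mixedness \<rho> = 1"
    unfolding Let_def werner[OF p] \<rho>_def[symmetric] using d by simp
qed

end
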